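(* Let $H$ be the Hilbert transform on $\mathbb{R}$ and $b(x)=\log|x|$. There exist constants $c_5,c_6>0$ such that for all $1<p<\infty$, \[ \|H\|_{L^p(\mathbb{R})\to L^{p,\infty}(\mathbb{R})}\ge c_5\,p,\qquad \|[b,H]\|_{L^p(\mathbb{R})\to L^{p,\infty}(\mathbb{R})}\ge c_6\max\{p',p^2\}. \]
   Context: $Hf(x)=\mathrm{p.v.}\int_{\mathbb{R}}\frac{f(y)}{x-y}\,dy$; $[b,H]f=bHf-H(bf)$; $p'=p/(p-1)$; $L^{p,\infty}$ has quasi-norm $\sup_{\lambda>0}\lambda|\{|g|>\lambda\}|^{1/p}$. *)

theory Defs
  imports "HOL-Analysis.Analysis"
begin

text \<open>Truncated Hilbert integral and the principal value Hilbert transform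
  Hf(x) = p.v. int f(y)/(x-y) dy  (no 1/pi normalisation), as a limit eps -> 0+.\<close>
definition hilbert :: "(real \<Rightarrow> real) \<Rightarrow> real \<Rightarrow> real" where
  "hilbert f x = Lim (at_right 0)
     (\<lambda>\<epsilon>. LINT y|lebesgue. indicator {y. \<epsilon> < \<bar>x - y\<bar>} y * f y / (x - y))"

definition commH :: "(real \<Rightarrow> real) \<Rightarrow> (real \<Rightarrow> real) \<Rightarrow> real \<Rightarrow> real" where
  "commH b f x = b x * hilbert f x - hilbert (\<lambda>y. b y * f y) x"

definition in_Lp :: "real \<Rightarrow> (real \<Rightarrow> real) \<Rightarrow> bool" where
  "in_Lp p f \<longleftrightarrow> f \<in> borel_measurable lebesgue \<and> integrable lebesgue (\<lambda>x. \<bar>f x\<bar> powr p)"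

definition Lp_norm :: "real \<Rightarrow> (real \<Rightarrow> real) \<Rightarrow> real" where
  "Lp_norm p f = (LINT x|lebesgue. \<bar>f x\<bar> powr p) powr (1 / p)"

text \<open>Weak L^p quasi-norm sup_{lambda>0} lambda |{|g|>lambda}|^(1/p), computed as
  (sup_{lambda>0} lambda^p |{|g|>lambda}|)^(1/p), with value infinity allowed.\<close>
definition weakLp_norm :: "real \<Rightarrow> (real \<Rightarrow> real) \<Rightarrow> ereal" where
  "weakLp_norm p g =
     (let M = (SUP t\<in>{0<..}. ennreal (t powr p) * emeasure lebesgue {x. t < \<bar>g x\<bar>})
      in if M = \<infinity> then \<infinity> else ereal (enn2real M powr (1 / p)))"

definition op_norm_Lp_weak :: "real \<Rightarrow> ((real \<Rightarrow> real) \<Rightarrow> (real \<Rightarrow> real)) \<Rightarrow> ereal" where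
  "op_norm_Lp_weak p T =
     (SUP f\<in>{f. in_Lp p f \<and> Lp_norm p f > 0}. weakLp_norm p (T f) / ereal (Lp_norm p f))"

end

theory Submission
  imports Defs
begin


lemma Lim_at_right_eq: "(F \<longlongrightarrow> c) (at_right (0::real)) \<Longrightarrow> Lim (at_right 0) F = c"
  by (rule tendsto_Lim) auto

lemma bl: "f \<in> borel_measurable borel \<Longrightarrow> f \<in> borel_measurable lebesgue"
  by (rule measurable_completion) simp

lemma LINT_interval:
  fixes F :: "real \<Rightarrow> real"
  assumes "continuous_on {c..d} F"
  shows "integrable lebesgue (\<lambda>y. indicator {c..d} y * F y)"
    and "(LINT y|lebesgue. indicator {c..d} y * F y) = integral {c..d} F"
proof -
  have si: "set_integrable lebesgue {c..d} F"
    using absolutely_integrable_continuous_real[OF assms] .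
  then show "integrable lebesgue (\<lambda>y. indicator {c..d} y * F y)"
    by (simp add: set_integrable_def)
  show "(LINT y|lebesgue. indicator {c..d} y * F y) = integral {c..d} F"
    using set_lebesgue_integral_eq_integral(2)[OF si] by (simp add: set_lebesgue_integral_def)
qed

lemma FTC_real:
  fixes f f' :: "real \<Rightarrow> real"
  assumes "c \<le> d" "\<And>x. x \<in> {c..d} \<Longrightarrow> (f has_real_derivative f' x) (at x)"
  shows "integral {c..d} f' = f d - f c" "f' integrable_on {c..d}"
proof -
  have "(f' has_integral (f d - f c)) {c..d}"
    apply (rule fundamental_theorem_of_calculus[OF assms(1)])
    using assms(2) by (simp add: has_real_derivative_iff_has_vector_derivative[symmetric] has_field_derivative_at_within)
  then show "integral {c..d} f' = f d - f c" "f' integrable_on {c..d}" by (auto simp: integral_unique integrable_on_def)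
qed

lemma J_integral:
  fixes a b x e :: real
  assumes "a < x" "x < b" "0 < e" "e < x - a" "e < b - x"
  shows "integrable lebesgue (\<lambda>y. indicator {y. e < \<bar>x - y\<bar>} y * indicator {a..b} y / (x - y))"
    and "(LINT y|lebesgue. indicator {y. e < \<bar>x - y\<bar>} y * indicator {a..b} y / (x - y)) = ln (x - a) - ln (b - x)"
proof -
  have c1: "continuous_on {a..x-e} (\<lambda>y. 1 / (x - y))" using assms
    by (intro continuous_intros) auto
  have c2: "continuous_on {x+e..b} (\<lambda>y. 1 / (x - y))" using assms
    by (intro continuous_intros) auto
  have i1: "integral {a..x-e} (\<lambda>y. 1 / (x - y)) = ln (x - a) - ln e"
  proof -
    have "integral {a..x-e} (\<lambda>y. 1 / (x - y)) = (- ln (x - (x - e))) - (- ln (x - a))"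
      apply (rule FTC_real) using assms apply simp
      apply (rule derivative_eq_intros refl | use assms in force)+
      done
    then show ?thesis by simp
  qed
  have i2: "integral {x+e..b} (\<lambda>y. 1 / (x - y)) = ln e - ln (b - x)"
  proof -
    have "integral {x+e..b} (\<lambda>y. 1 / (x - y)) = (- ln (b - x)) - (- ln ((x + e) - x))"
      apply (rule FTC_real) using assms apply simp
      apply (rule derivative_eq_intros refl | use assms in force)+
      apply (simp add: minus_divide_right)
      done
    then show ?thesis by simp
  qed
  have ae: "AE y in lebesgue. indicator {y. e < \<bar>x - y\<bar>} y * indicator {a..b} y / (x - y)
      = indicator {a..x-e} y * (1 / (x - y)) + indicator {x+e..b} y * (1 / (x - y))"
  proof -
    have "AE y in lebesgue. y \<noteq> x - e \<and> y \<noteq> x + e"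
      by (intro AE_completion AE_conjI AE_lborel_singleton)
    then show ?thesis
      by eventually_elim (use assms in \<open>auto simp: indicator_def\<close>)
  qed
  note I1 = LINT_interval[OF c1] and I2 = LINT_interval[OF c2]
  have int: "integrable lebesgue (\<lambda>y. indicator {a..x-e} y * (1 / (x - y)) + indicator {x+e..b} y * (1 / (x - y)))"
    using I1(1) I2(1) by simp
  have meas: "(\<lambda>y. indicator {y. e < \<bar>x - y\<bar>} y * indicator {a..b} y / (x - y)) \<in> borel_measurable lebesgue"
    by (rule bl) measurable
  show "integrable lebesgue (\<lambda>y. indicator {y. e < \<bar>x - y\<bar>} y * indicator {a..b} y / (x - y))"
    using integrable_cong_AE_imp[OF int meas] ae by (simp add: eq_commute)
  have "(LINT y|lebesgue. indicator {y. e < \<bar>x - y\<bar>} y * indicator {a..b} y / (x - y))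
     = (LINT y|lebesgue. indicator {a..x-e} y * (1 / (x - y)) + indicator {x+e..b} y * (1 / (x - y)))"
    by (rule integral_cong_AE[OF meas _ ae]) (use int in auto)
  also have "\<dots> = ln (x - a) - ln (b - x)"
    using I1 I2 i1 i2 by (simp add: Bochner_Integration.integral_add)
  finally show "(LINT y|lebesgue. indicator {y. e < \<bar>x - y\<bar>} y * indicator {a..b} y / (x - y)) = ln (x - a) - ln (b - x)" .
qed


definition hg :: "(real \<Rightarrow> real) \<Rightarrow> real \<Rightarrow> real \<Rightarrow> real \<Rightarrow> real" where
  "hg g a b x = (LINT y|lebesgue. indicator {a..b} y * (g y - g x * indicator {a<..<b} x) / (x - y))
     + indicator {a<..<b} x * g x * (ln (x - a) - ln (b - x))"

lemma pv:
  fixes g :: "real \<Rightarrow> real"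
  assumes ab: "a < b" and g[measurable]: "g \<in> borel_measurable borel"
    and lip: "\<And>u v. u \<in> {a..b} \<Longrightarrow> v \<in> {a..b} \<Longrightarrow> \<bar>g u - g v\<bar> \<le> L * \<bar>u - v\<bar>"
    and xa: "x \<noteq> a" and xb: "x \<noteq> b"
  shows "hilbert (\<lambda>y. g y * indicator {a..b} y) x = hg g a b x"
  unfolding hilbert_def
proof (rule Lim_at_right_eq)
  define T where "T e = (LINT y|lebesgue. indicator {y. e < \<bar>x - y\<bar>} y * (g y * indicator {a..b} y) / (x - y))" for e
  show "(T \<longlongrightarrow> hg g a b x) (at_right 0)"
  proof (cases "x \<in> {a<..<b}")
    case False
    then have xo: "x < a \<or> b < x" using xa xb by auto
    define d where "d = min \<bar>x - a\<bar> \<bar>x - b\<bar>"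
    have d: "d > 0" using xa xb by (simp add: d_def)
    have dy: "d \<le> \<bar>x - y\<bar>" if "y \<in> {a..b}" for y
      using xo that by (auto simp: d_def)
    have "eventually (\<lambda>e. T e = hg g a b x) (at_right 0)"
      using eventually_at_right_real[OF d]
    proof (rule eventually_mono)
      fix e assume e: "e \<in> {0<..<d}"
      have "indicator {y. e < \<bar>x - y\<bar>} y * (g y * indicator {a..b} y) / (x - y)
          = indicator {a..b} y * (g y - g x * indicator {a<..<b} x) / (x - y)" for y
        using e dy[of y] False by (auto simp: indicator_def)
      then have "T e = (LINT y|lebesgue. indicator {a..b} y * (g y - g x * indicator {a<..<b} x) / (x - y))"
        unfolding T_def by presburger
      then show "T e = hg g a b x" using False by (simp add: hg_def)
    qed
    then show ?thesis by (rule tendsto_eventually)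
  next
    case True
    then have ax: "a < x" and xb': "x < b" by auto
    have "0 \<le> L * (b - a)" using lip[of a b] ab by (smt (verit) atLeastAtMost_iff)
    then have L0: "0 \<le> L" using ab by (simp add: zero_le_mult_iff)
    define K where "K y = indicator {a..b} y * (g y - g x) / (x - y)" for y
    have Kb: "\<bar>K y\<bar> \<le> indicator {a..b} y * L" for y
    proof (cases "y \<in> {a..b} \<and> y \<noteq> x")
      case True
      have "\<bar>K y\<bar> = \<bar>g y - g x\<bar> / \<bar>x - y\<bar>" using True by (simp add: K_def abs_divide)
      also have "\<dots> \<le> L * \<bar>y - x\<bar> / \<bar>x - y\<bar>"
        using lip[of y x] True ax xb' by (intro divide_right_mono) auto
      also have "\<dots> = L" using True by (simp add: abs_minus_commute)
      finally show ?thesis using True by simp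
    next
      case False then show ?thesis using L0 by (auto simp: K_def indicator_def)
    qed
    have Km[measurable]: "K \<in> borel_measurable lebesgue" unfolding K_def by (rule bl) measurable
    have Bint: "integrable lebesgue (\<lambda>y. indicator {a..b} y * L)"
      using LINT_interval(1)[of a b "\<lambda>_. L"] by simp
    have Kint: "integrable lebesgue K"
      by (rule Bochner_Integration.integrable_bound[OF Bint Km]) (use Kb L0 in auto)
    define Ke where "Ke e y = indicator {y. e < \<bar>x - y\<bar>} y * K y" for e y
    have Kem[measurable]: "Ke e \<in> borel_measurable lebesgue" for e
      unfolding Ke_def K_def by (rule bl) measurable
    have Keint: "integrable lebesgue (Ke e)" for e
    proof (rule Bochner_Integration.integrable_bound[OF Bint Kem], rule AE_I2)
      fix y
      have "\<bar>Ke e y\<bar> \<le> \<bar>K y\<bar>" by (simp add: Ke_def indicator_def)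
      also have "\<dots> \<le> indicator {a..b} y * L" by (rule Kb)
      finally show "norm (Ke e y) \<le> norm (indicator {a..b} y * L)" by simp
    qed
    have hgx: "hg g a b x = (LINT y|lebesgue. K y) + g x * (ln (x - a) - ln (b - x))"
      using True by (simp add: hg_def K_def)
    define m where "m = min (x - a) (b - x)"
    have m: "m > 0" using ax xb' by (simp add: m_def)
    have "eventually (\<lambda>e. norm (T e - hg g a b x) \<le> 2 * L * e) (at_right 0)"
      using eventually_at_right_real[OF m]
    proof (rule eventually_mono)
      fix e assume e: "e \<in> {0<..<m}"
      then have e0: "0 < e" "e < x - a" "e < b - x" by (auto simp: m_def)
      note J = J_integral[OF ax xb' e0]
      have pw: "indicator {y. e < \<bar>x - y\<bar>} y * (g y * indicator {a..b} y) / (x - y)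
          = Ke e y + g x * (indicator {y. e < \<bar>x - y\<bar>} y * indicator {a..b} y / (x - y))" for y
        by (auto simp: Ke_def K_def indicator_def diff_divide_distrib)
      define Jf where "Jf y = indicator {y. e < \<bar>x - y\<bar>} y * indicator {a..b} y / (x - y)" for y
      have Jf_eq: "Jf = (\<lambda>y. indicator {y. e < \<bar>x - y\<bar>} y * indicator {a..b} y / (x - y))"
        by (simp add: Jf_def fun_eq_iff)
      have Jint: "integrable lebesgue Jf" unfolding Jf_eq by (rule J(1))
      have "T e = (LINT y|lebesgue. Ke e y + g x * Jf y)"
        unfolding T_def pw Jf_def ..
      also have "\<dots> = (LINT y|lebesgue. Ke e y) + (LINT y|lebesgue. g x * Jf y)"
        by (rule Bochner_Integration.integral_add) (use Keint Jint in auto)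
      also have "(LINT y|lebesgue. g x * Jf y) = g x * (LINT y|lebesgue. Jf y)"
        by (rule integral_mult_right_zero)
      also have "(LINT y|lebesgue. Jf y) = ln (x - a) - ln (b - x)"
        unfolding Jf_eq by (rule J(2))
      finally have Te: "T e = (LINT y|lebesgue. Ke e y) + g x * (ln (x - a) - ln (b - x))" .
      have "T e - hg g a b x = (LINT y|lebesgue. Ke e y - K y)"
        using Te hgx Keint Kint by (simp add: Bochner_Integration.integral_diff)
      also have "\<bar>\<dots>\<bar> \<le> (LINT y|lebesgue. indicator {x-e..x+e} y * L)"
      proof (rule integral_abs_bound_integral)
        show "integrable lebesgue (\<lambda>y. Ke e y - K y)" using Keint Kint by simp
        show "integrable lebesgue (\<lambda>y. indicator {x-e..x+e} y * L)"
          using LINT_interval(1)[of "x-e" "x+e" "\<lambda>_. L"] by simp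
        fix y
        show "\<bar>Ke e y - K y\<bar> \<le> indicator {x - e..x + e} y * L"
        proof (cases "e < \<bar>x - y\<bar>")
          case True then show ?thesis using L0 by (simp add: Ke_def)
        next
          case False
          then have "y \<in> {x-e..x+e}" by auto
          moreover have "\<bar>K y\<bar> \<le> L"
            using Kb[of y] L0 by (cases "y \<in> {a..b}") auto
          ultimately show ?thesis using False by (simp add: Ke_def)
        qed
      qed
      also have "\<dots> = 2 * L * e"
        using LINT_interval(2)[of "x-e" "x+e" "\<lambda>_. L"] e0 by simp
      finally show "norm (T e - hg g a b x) \<le> 2 * L * e" by simp
    qed
    moreover have "((\<lambda>e. 2 * L * e) \<longlongrightarrow> 0) (at_right 0)"
      by (auto intro!: tendsto_eq_intros)
    ultimately have "((\<lambda>e. T e - hg g a b x) \<longlongrightarrow> 0) (at_right 0)"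
      by (rule Lim_null_comparison)
    then show ?thesis by (simp add: LIM_zero_iff)
  qed
qed


lemma hg_meas:
  assumes g[measurable]: "g \<in> borel_measurable borel"
  shows "hg g a b \<in> borel_measurable lebesgue"
proof -
  have "hg g a b x = (LINT y|lborel. indicator {a..b} y * (g y - g x * indicator {a<..<b} x) / (x - y))
     + indicator {a<..<b} x * g x * (ln (x - a) - ln (b - x))" for x
    unfolding hg_def by (subst integral_completion) auto
  then have eq: "hg g a b = (\<lambda>x. (LINT y|lborel. indicator {a..b} y * (g y - g x * indicator {a<..<b} x) / (x - y))
     + indicator {a<..<b} x * g x * (ln (x - a) - ln (b - x)))" by (simp add: fun_eq_iff)
  have "(\<lambda>x. (LINT y|lborel. indicator {a..b} y * (g y - g x * indicator {a<..<b} x) / (x - y))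
     + indicator {a<..<b} x * g x * (ln (x - a) - ln (b - x))) \<in> borel_measurable lborel"
    by measurable
  then show ?thesis unfolding eq by (rule measurable_completion)
qed

lemma meas_except:
  fixes k h :: "real \<Rightarrow> real"
  assumes h[measurable]: "h \<in> borel_measurable lebesgue" and eq: "\<And>x. x \<noteq> a \<Longrightarrow> x \<noteq> b \<Longrightarrow> k x = h x"
  shows "k \<in> borel_measurable lebesgue"
proof -
  have [measurable]: "{a} \<in> sets lebesgue" "{b} \<in> sets lebesgue" by auto
  have "k = (\<lambda>x. if x \<in> {a} then k a else if x \<in> {b} then k b else h x)"
    using eq by (auto simp: fun_eq_iff)
  also have "\<dots> \<in> borel_measurable lebesgue" by measurable
  finally show ?thesis .
qed


lemma hg_out:
  assumes x: "x < a" and c: "continuous_on {a..b} g"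
  shows "hg g a b x = integral {a..b} (\<lambda>y. g y / (x - y))"
proof -
  have c2: "continuous_on {a..b} (\<lambda>y. g y / (x - y))"
    using x by (intro continuous_intros c) auto
  have "hg g a b x = (LINT y|lebesgue. indicator {a..b} y * (g y / (x - y)))"
    using x by (simp add: hg_def)
  also have "\<dots> = integral {a..b} (\<lambda>y. g y / (x - y))" by (rule LINT_interval(2)[OF c2])
  finally show ?thesis .
qed

lemma ln_lip:
  fixes a b u v :: real
  assumes "0 < a" "u \<in> {a..b}" "v \<in> {a..b}"
  shows "\<bar>ln \<bar>u\<bar> - ln \<bar>v\<bar>\<bar> \<le> (1 / a) * \<bar>u - v\<bar>"
proof -
  have u: "u \<ge> a" "u > 0" and v: "v \<ge> a" "v > 0" using assms by auto
  have 1: "ln u - ln v \<le> (1 / a) * \<bar>u - v\<bar>" if "u \<ge> a" "u > 0" "v \<ge> a" "v > 0" for u v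
  proof -
    have "ln u - ln v = ln (u / v)" using that by (simp add: ln_div)
    also have "\<dots> \<le> u / v - 1" using that by (intro ln_le_minus_one) auto
    also have "\<dots> = (u - v) / v" using that by (simp add: field_simps)
    also have "\<dots> \<le> \<bar>u - v\<bar> / v" using that by (intro divide_right_mono) auto
    also have "\<dots> \<le> \<bar>u - v\<bar> / a" using that assms(1) by (intro divide_left_mono) auto
    finally show ?thesis by simp
  qed
  show ?thesis using 1[OF u v] 1[OF v u] u v by (simp add: abs_minus_commute)
qed

lemma Hind:
  assumes "0 < a" "a < b"
  shows "hilbert (indicator {a..b}) \<in> borel_measurable lebesgue"
    and "x < 0 \<Longrightarrow> hilbert (indicator {a..b}) x = integral {a..b} (\<lambda>y. 1 / (x - y))"
proof -
  have eq: "indicator {a..b} = (\<lambda>y. (\<lambda>_. 1::real) y * indicator {a..b} y)" by (simp add: fun_eq_iff)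
  have pv1: "hilbert (indicator {a..b}) x = hg (\<lambda>_. 1) a b x" if "x \<noteq> a" "x \<noteq> b" for x
    apply (subst eq) by (rule pv[where L=0]) (use assms that in simp_all)
  show "hilbert (indicator {a..b}) \<in> borel_measurable lebesgue"
    by (rule meas_except[OF hg_meas pv1]) simp_all
  assume x: "x < 0"
  have "hilbert (indicator {a..b}) x = hg (\<lambda>_. 1) a b x" using x assms by (intro pv1) simp_all
  also have "\<dots> = integral {a..b} (\<lambda>y. 1 / (x - y))"
    by (rule hg_out) (use x assms in simp_all)
  finally show "hilbert (indicator {a..b}) x = integral {a..b} (\<lambda>y. 1 / (x - y))" .
qed

lemma Hlog:
  assumes "0 < a" "a < b"
  shows "hilbert (\<lambda>y. ln \<bar>y\<bar> * indicator {a..b} y) \<in> borel_measurable lebesgue"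
    and "x < 0 \<Longrightarrow> hilbert (\<lambda>y. ln \<bar>y\<bar> * indicator {a..b} y) x = integral {a..b} (\<lambda>y. ln \<bar>y\<bar> / (x - y))"
proof -
  have pv1: "hilbert (\<lambda>y. ln \<bar>y\<bar> * indicator {a..b} y) x = hg (\<lambda>y. ln \<bar>y\<bar>) a b x" if "x \<noteq> a" "x \<noteq> b" for x
  proof (rule pv[where L="1/a"])
    show "\<And>u v. u \<in> {a..b} \<Longrightarrow> v \<in> {a..b} \<Longrightarrow> \<bar>ln \<bar>u\<bar> - ln \<bar>v\<bar>\<bar> \<le> 1 / a * \<bar>u - v\<bar>"
      by (rule ln_lip[OF assms(1)])
  qed (use assms that in auto)
  show "hilbert (\<lambda>y. ln \<bar>y\<bar> * indicator {a..b} y) \<in> borel_measurable lebesgue"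
    by (rule meas_except[OF hg_meas pv1]) auto
  assume x: "x < 0"
  have c: "continuous_on {a..b} (\<lambda>y. ln \<bar>y\<bar>)" using assms
    by (intro continuous_intros) auto
  show "hilbert (\<lambda>y. ln \<bar>y\<bar> * indicator {a..b} y) x = integral {a..b} (\<lambda>y. ln \<bar>y\<bar> / (x - y))"
    using pv1[of x] hg_out[OF _ c, of x] assms x by simp
qed

lemma Cval:
  assumes "0 < a" "a < b"
  shows "commH (\<lambda>x. ln \<bar>x\<bar>) (indicator {a..b}) \<in> borel_measurable lebesgue"
    and "x < 0 \<Longrightarrow> commH (\<lambda>x. ln \<bar>x\<bar>) (indicator {a..b}) x = integral {a..b} (\<lambda>y. (ln \<bar>x\<bar> - ln y) / (x - y))"
proof -
  note H1 = Hind[OF assms] and H2 = Hlog[OF assms]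
  have lnm: "(\<lambda>x::real. ln \<bar>x\<bar>) \<in> borel_measurable lebesgue" by (rule bl) measurable
  show "commH (\<lambda>x. ln \<bar>x\<bar>) (indicator {a..b}) \<in> borel_measurable lebesgue"
    unfolding commH_def using H1(1) H2(1) lnm by (intro borel_measurable_times borel_measurable_diff) auto
  assume x: "x < 0"
  have c1: "continuous_on {a..b} (\<lambda>y. 1 / (x - y))" using assms x by (intro continuous_intros) auto
  have c2: "continuous_on {a..b} (\<lambda>y. ln \<bar>y\<bar> / (x - y))" using assms x by (intro continuous_intros) auto
  have i1: "(\<lambda>y. 1 / (x - y)) integrable_on {a..b}" by (rule integrable_continuous_interval[OF c1])
  have i2: "(\<lambda>y. ln \<bar>y\<bar> / (x - y)) integrable_on {a..b}" by (rule integrable_continuous_interval[OF c2])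
  have "commH (\<lambda>x. ln \<bar>x\<bar>) (indicator {a..b}) x
      = ln \<bar>x\<bar> * integral {a..b} (\<lambda>y. 1 / (x - y)) - integral {a..b} (\<lambda>y. ln \<bar>y\<bar> / (x - y))"
    unfolding commH_def using H1(2)[OF x] H2(2)[OF x] by simp
  also have "\<dots> = integral {a..b} (\<lambda>y. ln \<bar>x\<bar> * (1 / (x - y)) - ln \<bar>y\<bar> / (x - y))"
  proof -
    have "integral {a..b} (\<lambda>y. ln \<bar>x\<bar> * (1 / (x - y))) = ln \<bar>x\<bar> * integral {a..b} (\<lambda>y. 1 / (x - y))"
      by (rule integral_mult_right)
    moreover have "(\<lambda>y. ln \<bar>x\<bar> * (1 / (x - y))) integrable_on {a..b}"
      using integrable_on_cmult_left[OF i1, of "ln \<bar>x\<bar>"] by simp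
    ultimately show ?thesis using i2 by (simp only: integral_diff)
  qed
  also have "\<dots> = integral {a..b} (\<lambda>y. (ln \<bar>x\<bar> - ln y) / (x - y))"
    using assms by (intro integral_cong) (auto simp: diff_divide_distrib)
  finally show "commH (\<lambda>x. ln \<bar>x\<bar>) (indicator {a..b}) x = integral {a..b} (\<lambda>y. (ln \<bar>x\<bar> - ln y) / (x - y))" .
qed

lemma weak_lower:
  fixes g :: "real \<Rightarrow> real"
  assumes g: "g \<in> borel_measurable lebesgue" and p: "p > 0" and t: "t > 0" and lu: "l < u"
    and sub: "\<And>x. l < x \<Longrightarrow> x < u \<Longrightarrow> t < \<bar>g x\<bar>"
  shows "ereal (t * (u - l) powr (1/p)) \<le> weakLp_norm p g"
proof -
  define M where "M = (SUP t\<in>{0<..}. ennreal (t powr p) * emeasure lebesgue {x. t < \<bar>g x\<bar>})"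
  have [measurable]: "g \<in> borel_measurable lebesgue" by (rule g)
  have "(\<lambda>x. \<bar>g x\<bar>) \<in> borel_measurable lebesgue" by measurable
  then have Sm: "{x. t < \<bar>g x\<bar>} \<in> sets lebesgue"
    unfolding borel_measurable_iff_greater by simp
  have "emeasure lebesgue {l<..<u} \<le> emeasure lebesgue {x. t < \<bar>g x\<bar>}"
    by (rule emeasure_mono[OF _ Sm]) (auto intro: sub)
  moreover have "emeasure lebesgue {l<..<u} = ennreal (u - l)" using lu by simp
  ultimately have "ennreal (t powr p) * ennreal (u - l) \<le> ennreal (t powr p) * emeasure lebesgue {x. t < \<bar>g x\<bar>}"
    by (simp add: mult_left_mono)
  also have "\<dots> \<le> M" unfolding M_def using t by (intro SUP_upper) auto
  finally have le: "ennreal (t powr p * (u - l)) \<le> M" using t lu by (simp add: ennreal_mult)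
  show ?thesis
  proof (cases "M = \<infinity>")
    case True then show ?thesis by (simp add: weakLp_norm_def M_def[symmetric])
  next
    case False
    have "t powr p * (u - l) \<le> enn2real M"
    proof -
      have "enn2real (ennreal (t powr p * (u - l))) \<le> enn2real M"
        using le False by (intro enn2real_mono) (auto simp: top.not_eq_extremum)
      then show ?thesis using lu by simp
    qed
    then have "(t powr p * (u - l)) powr (1/p) \<le> enn2real M powr (1/p)"
      using p t lu by (intro powr_mono2) auto
    moreover have "(t powr p * (u - l)) powr (1/p) = t * (u - l) powr (1/p)"
      using p t lu by (simp add: powr_mult powr_powr)
    ultimately show ?thesis using False by (simp add: weakLp_norm_def M_def[symmetric])
  qed
qed

lemma op_lower:
  assumes "in_Lp p f" "0 < Lp_norm p f" "Lp_norm p f \<le> 1"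
  shows "weakLp_norm p (T f) \<le> op_norm_Lp_weak p T"
proof -
  have "weakLp_norm p (T f) \<ge> 0"
  proof -
    have "\<And>M::ennreal. (if M = \<infinity> then \<infinity> else ereal (enn2real M powr (1/p))) \<ge> 0" by simp
    then show ?thesis unfolding weakLp_norm_def Let_def by blast
  qed
  then have "weakLp_norm p (T f) \<le> weakLp_norm p (T f) / ereal (Lp_norm p f)"
  proof (cases "weakLp_norm p (T f)")
    case (real r)
    then have "r \<ge> 0" using \<open>weakLp_norm p (T f) \<ge> 0\<close> by simp
    then have "r \<le> r / Lp_norm p f" using assms(2,3)
      using divide_left_mono[of "Lp_norm p f" 1 r] by simp
    then show ?thesis using real assms(2) by simp
  next
    case PInf then show ?thesis using assms(2) by simp
  next
    case MInf then show ?thesis using \<open>weakLp_norm p (T f) \<ge> 0\<close> by simp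
  qed
  also have "\<dots> \<le> op_norm_Lp_weak p T"
    unfolding op_norm_Lp_weak_def using assms by (intro SUP_upper) simp
  finally show ?thesis .
qed

lemma ind_Lp:
  assumes "c < d"
  shows "in_Lp p (indicator {c..d})" "Lp_norm p (indicator {c..d}) = (d - c) powr (1/p)"
proof -
  have e: "(\<lambda>x. \<bar>indicator {c..d} x :: real\<bar> powr p) = (\<lambda>y. indicator {c..d} y * 1)"
    by (simp add: fun_eq_iff indicator_def)
  note L = LINT_interval[of c d "\<lambda>_. 1"]
  show "in_Lp p (indicator {c..d})" unfolding in_Lp_def e using L(1) by auto
  show "Lp_norm p (indicator {c..d}) = (d - c) powr (1/p)" unfolding Lp_norm_def e using L(2) assms by simp
qed




lemma est_H:
  assumes p: "p > 1"
  shows "ereal (exp (-2) / 2 * p) \<le> op_norm_Lp_weak p hilbert"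
proof -
  define d where "d = exp (-2 * p)"
  have d0: "0 < d" "d < 1" using p by (auto simp: d_def)
  note Lp = ind_Lp[OF d0(2), of p]
  have N: "0 < Lp_norm p (indicator {d..1})" "Lp_norm p (indicator {d..1}) \<le> 1"
    unfolding Lp(2) using d0 p by (auto intro: powr_le1)
  have val: "p / 2 < \<bar>hilbert (indicator {d..1}) x\<bar>" if x: "- d < x" "x < 0" for x
  proof -
    have c1: "continuous_on {d..1} (\<lambda>y. 1 / (2 * y))" using d0 by (intro continuous_intros) auto
    have c2: "continuous_on {d..1} (\<lambda>y. 1 / (y - x))" using d0 x by (intro continuous_intros) auto
    have "integral {d..1} (\<lambda>y. 1 / (2 * y)) = ln 1 / 2 - ln d / 2"
      apply (rule FTC_real) using d0 apply simp
      apply (rule derivative_eq_intros refl | use d0 in force)+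
      done
    then have i1: "integral {d..1} (\<lambda>y. 1 / (2 * y)) = p" by (simp add: d_def)
    have "integral {d..1} (\<lambda>y. 1 / (2 * y)) \<le> integral {d..1} (\<lambda>y. 1 / (y - x))"
    proof (rule integral_le[OF integrable_continuous_interval[OF c1] integrable_continuous_interval[OF c2]])
      fix y assume "y \<in> {d..1}"
      then have "0 < y - x" "y - x \<le> 2 * y" using x d0 by auto
      then show "1 / (2 * y) \<le> 1 / (y - x)" by (intro divide_left_mono) auto
    qed
    also have "integral {d..1} (\<lambda>y. 1 / (y - x)) = - integral {d..1} (\<lambda>y. 1 / (x - y))"
    proof -
      have "integral {d..1} (\<lambda>y. 1 / (y - x)) = integral {d..1} (\<lambda>y. - (1 / (x - y)))"
        by (intro integral_cong) (simp add: minus_divide_right)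
      then show ?thesis by (simp add: integral_neg)
    qed
    also have "\<dots> = - hilbert (indicator {d..1}) x" using Hind(2)[OF d0(1) d0(2) x(2)] by simp
    finally show ?thesis using i1 p by linarith
  qed
  have "ereal (p / 2 * (0 - - d) powr (1 / p)) \<le> weakLp_norm p (hilbert (indicator {d..1}))"
    by (rule weak_lower[OF Hind(1)[OF d0]]) (use p d0 val in auto)
  also have "\<dots> \<le> op_norm_Lp_weak p hilbert" by (rule op_lower[OF Lp(1) N])
  finally have "ereal (p / 2 * d powr (1 / p)) \<le> op_norm_Lp_weak p hilbert" by simp
  moreover have "d powr (1 / p) = exp (-2)" using p d0 by (simp add: powr_def d_def)
  ultimately show ?thesis by (simp add: mult.commute)
qed




lemma est_C1:
  assumes p: "p > 1"
  shows "ereal (exp (-2) / 2 * p^2) \<le> op_norm_Lp_weak p (commH (\<lambda>x. ln \<bar>x\<bar>))"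
proof -
  define d where "d = exp (-2 * p)"
  have d0: "0 < d" "d < 1" using p by (auto simp: d_def)
  note Lp = ind_Lp[OF d0(2), of p]
  have N: "0 < Lp_norm p (indicator {d..1})" "Lp_norm p (indicator {d..1}) \<le> 1"
    unfolding Lp(2) using d0 p by (auto intro: powr_le1)
  have val: "p^2 / 2 < \<bar>commH (\<lambda>x. ln \<bar>x\<bar>) (indicator {d..1}) x\<bar>" if x: "- d < x" "x < 0" for x
  proof -
    have c1: "continuous_on {d..1} (\<lambda>y. (ln y - ln d) / (2 * y))" using d0 by (intro continuous_intros) auto
    have c2: "continuous_on {d..1} (\<lambda>y. (ln y - ln \<bar>x\<bar>) / (y - x))" using d0 x by (intro continuous_intros) auto
    have "integral {d..1} (\<lambda>y. (ln y - ln d) / (2 * y)) = (ln 1 - ln d)^2 / 4 - (ln d - ln d)^2 / 4"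
      apply (rule FTC_real) using d0 apply simp
      apply (rule derivative_eq_intros refl | use d0 in force)+
      using d0 apply (simp add: field_simps power2_eq_square)
      done
    then have i1: "integral {d..1} (\<lambda>y. (ln y - ln d) / (2 * y)) = p^2" by (simp add: d_def power2_eq_square)
    have lx: "ln \<bar>x\<bar> < ln d" using x by simp
    have "integral {d..1} (\<lambda>y. (ln y - ln d) / (2 * y)) \<le> integral {d..1} (\<lambda>y. (ln y - ln \<bar>x\<bar>) / (y - x))"
    proof (rule integral_le[OF integrable_continuous_interval[OF c1] integrable_continuous_interval[OF c2]])
      fix y assume y: "y \<in> {d..1}"
      then have yx: "0 < y - x" "y - x \<le> 2 * y" using x d0 by auto
      have ly: "ln d \<le> ln y" using y d0 by simp
      have "(ln y - ln d) / (2 * y) \<le> (ln y - ln \<bar>x\<bar>) / (2 * y)"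
        using lx y d0 by (intro divide_right_mono) auto
      also have "\<dots> \<le> (ln y - ln \<bar>x\<bar>) / (y - x)"
        using yx lx ly by (intro divide_left_mono) auto
      finally show "(ln y - ln d) / (2 * y) \<le> (ln y - ln \<bar>x\<bar>) / (y - x)" .
    qed
    also have "integral {d..1} (\<lambda>y. (ln y - ln \<bar>x\<bar>) / (y - x)) = integral {d..1} (\<lambda>y. (ln \<bar>x\<bar> - ln y) / (x - y))"
    proof (intro integral_cong)
      fix y show "(ln y - ln \<bar>x\<bar>) / (y - x) = (ln \<bar>x\<bar> - ln y) / (x - y)"
        by (metis minus_diff_eq minus_divide_divide)
    qed
    also have "\<dots> = commH (\<lambda>x. ln \<bar>x\<bar>) (indicator {d..1}) x" using Cval(2)[OF d0(1) d0(2) x(2)] by simp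
    finally have "p^2 \<le> commH (\<lambda>x. ln \<bar>x\<bar>) (indicator {d..1}) x" using i1 by simp
    moreover have "0 < p^2" using p by simp
    ultimately show ?thesis using abs_ge_self[of "commH (\<lambda>x. ln \<bar>x\<bar>) (indicator {d..1}) x"] by linarith
  qed
  have "ereal (p^2 / 2 * (0 - - d) powr (1 / p)) \<le> weakLp_norm p (commH (\<lambda>x. ln \<bar>x\<bar>) (indicator {d..1}))"
    by (rule weak_lower[OF Cval(1)[OF d0]]) (use p d0 val in auto)
  also have "\<dots> \<le> op_norm_Lp_weak p (commH (\<lambda>x. ln \<bar>x\<bar>))" by (rule op_lower[OF Lp(1) N])
  finally have "ereal (p^2 / 2 * d powr (1 / p)) \<le> op_norm_Lp_weak p (commH (\<lambda>x. ln \<bar>x\<bar>))" by simp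
  moreover have "d powr (1 / p) = exp (-2)" using p d0 by (simp add: powr_def d_def)
  ultimately show ?thesis by (simp add: mult.commute)
qed



lemma est_C2:
  assumes p: "p > 1" "p \<le> 2"
  shows "ereal (exp (-2) / (6 * (p - 1))) \<le> op_norm_Lp_weak p (commH (\<lambda>x. ln \<bar>x\<bar>))"
proof -
  define A where "A = exp (2 / (p - 1))"
  have lnA: "ln A = 2 / (p - 1)" by (simp add: A_def)
  have lnA2: "ln A \<ge> 2" unfolding lnA using p by (simp add: field_simps)
  have A0: "A > 0" by (simp add: A_def)
  have A3: "A \<ge> 3"
  proof -
    have "1 + 2 / (p - 1) \<le> A" unfolding A_def by (rule exp_ge_add_one_self)
    then show ?thesis using lnA lnA2 by linarith
  qed
  have ln2: "ln (2::real) < 1" by (rule ln_2_less_1)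
  have Lp: "in_Lp p (indicator {1..2::real})" "Lp_norm p (indicator {1..2::real}) = 1"
    using ind_Lp[of 1 2 p] by simp_all
  have N: "0 < Lp_norm p (indicator {1..2::real})" "Lp_norm p (indicator {1..2::real}) \<le> 1"
    unfolding Lp(2) by auto
  define t where "t = ln A / (12 * A)"
  have t0: "t > 0" unfolding t_def using lnA2 A0 A3 by (intro divide_pos_pos) auto
  have val: "t < \<bar>commH (\<lambda>x. ln \<bar>x\<bar>) (indicator {1..2::real}) x\<bar>" if x: "- (2 * A) < x" "x < - A" for x
  proof -
    have x0: "x < 0" using x A0 by linarith
    have c2: "continuous_on {1..2::real} (\<lambda>y. (ln \<bar>x\<bar> - ln y) / (y - x))" using x0 by (intro continuous_intros) auto
    have lx: "ln A < ln \<bar>x\<bar>" using x A0 by simp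
    have "integral {1..2::real} (\<lambda>y. ln A / (6 * A)) \<le> integral {1..2::real} (\<lambda>y. (ln \<bar>x\<bar> - ln y) / (y - x))"
    proof (rule integral_le[OF _ integrable_continuous_interval[OF c2]])
      show "(\<lambda>y. ln A / (6 * A)) integrable_on {1..2::real}" by (rule integrable_const_ivl)
      fix y assume y: "y \<in> {1..2::real}"
      then have yx: "0 < y - x" "y - x \<le> 3 * A" using x A3 by auto
      have ly: "ln y \<le> ln 2" using y by simp
      have num: "ln A / 2 \<le> ln \<bar>x\<bar> - ln y" using lx ly ln2 lnA2 by linarith
      have "ln A / (6 * A) = (ln A / 2) / (3 * A)" by simp
      also have "\<dots> \<le> (ln \<bar>x\<bar> - ln y) / (3 * A)"
        using num A0 by (intro divide_right_mono) auto
      also have "\<dots> \<le> (ln \<bar>x\<bar> - ln y) / (y - x)"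
        using yx num lnA2 by (intro divide_left_mono) auto
      finally show "ln A / (6 * A) \<le> (ln \<bar>x\<bar> - ln y) / (y - x)" .
    qed
    also have "integral {1..2::real} (\<lambda>y. (ln \<bar>x\<bar> - ln y) / (y - x)) = - integral {1..2::real} (\<lambda>y. (ln \<bar>x\<bar> - ln y) / (x - y))"
    proof -
      have "integral {1..2::real} (\<lambda>y. (ln \<bar>x\<bar> - ln y) / (y - x)) = integral {1..2::real} (\<lambda>y. - ((ln \<bar>x\<bar> - ln y) / (x - y)))"
        by (intro integral_cong) (simp add: minus_divide_right)
      then show ?thesis by (simp add: integral_neg)
    qed
    also have "\<dots> = - commH (\<lambda>x. ln \<bar>x\<bar>) (indicator {1..2::real}) x" using Cval(2)[of 1 2 x] x0 by simp
    finally have "ln A / (6 * A) \<le> - commH (\<lambda>x. ln \<bar>x\<bar>) (indicator {1..2::real}) x" by simp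
    moreover have "t < ln A / (6 * A)" unfolding t_def
      by (intro divide_strict_left_mono) (use A0 A3 lnA2 in auto)
    ultimately show ?thesis by linarith
  qed
  have "ereal (t * (- A - - (2 * A)) powr (1 / p)) \<le> weakLp_norm p (commH (\<lambda>x. ln \<bar>x\<bar>) (indicator {1..2::real}))"
    by (rule weak_lower[OF Cval(1)]) (use p A0 t0 val in auto)
  also have "\<dots> \<le> op_norm_Lp_weak p (commH (\<lambda>x. ln \<bar>x\<bar>))" by (rule op_lower[OF Lp(1) N])
  finally have 1: "ereal (t * A powr (1 / p)) \<le> op_norm_Lp_weak p (commH (\<lambda>x. ln \<bar>x\<bar>))" by simp
  have "t * A powr (1 / p) = (1 / (6 * (p - 1))) * (A powr (1/p) / A)"
    unfolding t_def lnA using p A0 by (simp add: field_simps)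
  also have "A powr (1/p) / A = exp (- 2 / p)"
  proof -
    have "A powr (1/p) / A = exp (1/p * (2 / (p - 1)) - 2 / (p - 1))"
      using A0 by (simp add: powr_def lnA exp_diff A_def)
    also have "1/p * (2 / (p - 1)) - 2 / (p - 1) = - 2 / p"
    proof -
      have a: "p - 1 \<noteq> 0" "p \<noteq> 0" using p by auto
      have "1/p * (2 / (p - 1)) - 2 / (p - 1) = (2 - 2 * p) / (p * (p - 1))"
        using a by (simp add: divide_simps) (simp add: algebra_simps)
      also have "2 - 2 * p = (-2) * (p - 1)" by simp
      also have "(-2) * (p - 1) / (p * (p - 1)) = - 2 / p" by (rule nonzero_mult_divide_mult_cancel_right[OF a(1)])
      finally show ?thesis .
    qed
    finally show ?thesis .
  qed
  finally have 2: "t * A powr (1 / p) = (1 / (6 * (p - 1))) * exp (- 2 / p)" .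
  have "exp (-2) \<le> exp (- 2 / p)" using p by (simp add: field_simps)
  then have "exp (-2) / (6 * (p - 1)) \<le> t * A powr (1 / p)" unfolding 2 using p
    by (simp add: divide_right_mono)
  then show ?thesis using 1 by (meson ereal_less_eq(3) order_trans)
qed


theorem lemma1p2:
  "\<exists>c5 c6 :: real. c5 > 0 \<and> c6 > 0 \<and>
     (\<forall>p::real. 1 < p \<longrightarrow>
        op_norm_Lp_weak p hilbert \<ge> ereal (c5 * p) \<and>
        op_norm_Lp_weak p (commH (\<lambda>x. ln \<bar>x\<bar>)) \<ge> ereal (c6 * max (p / (p - 1)) (p ^ 2)))"
proof (intro exI conjI allI impI)
  show "exp (-2) / 2 > (0::real)" by simp
  show "exp (-2) / 24 > (0::real)" by simp
  fix p :: real assume p: "1 < p"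
  show "ereal (exp (-2) / 2 * p) \<le> op_norm_Lp_weak p hilbert" by (rule est_H[OF p])
  show "ereal (exp (-2) / 24 * max (p / (p - 1)) (p ^ 2)) \<le> op_norm_Lp_weak p (commH (\<lambda>x. ln \<bar>x\<bar>))"
  proof (cases "p \<le> 2")
    case True
    have p1: "0 < p - 1" "p - 1 \<le> 1" using p True by auto
    have m1: "p / (p - 1) \<le> 4 / (p - 1)" using p1 True by (intro divide_right_mono) auto
    have "p^2 \<le> 2^2" using p True by (intro power_mono) auto
    also have "(2::real)^2 \<le> 4 / (p - 1)" using p1 by (simp add: le_divide_eq)
    finally have m2: "p^2 \<le> 4 / (p - 1)" .
    have "exp (-2) / 24 * max (p / (p - 1)) (p ^ 2) \<le> exp (-2) / 24 * (4 / (p - 1))"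
      using m1 m2 by (intro mult_left_mono) auto
    also have "\<dots> = exp (-2) / (6 * (p - 1))" by simp
    finally have "ereal (exp (-2) / 24 * max (p / (p - 1)) (p ^ 2)) \<le> ereal (exp (-2) / (6 * (p - 1)))" by simp
    also have "\<dots> \<le> op_norm_Lp_weak p (commH (\<lambda>x. ln \<bar>x\<bar>))" by (rule est_C2[OF p True])
    finally show ?thesis .
  next
    case False
    have p1: "1 \<le> p - 1" using False by auto
    have "p / (p - 1) \<le> p" using p1 p by (simp add: divide_le_eq mult_le_cancel_left1)
    also have "p \<le> p^2" using p by (simp add: power2_eq_square)
    finally have m: "max (p / (p - 1)) (p ^ 2) = p^2" by simp
    have "exp (-2) / 24 * max (p / (p - 1)) (p ^ 2) \<le> exp (-2) / 2 * p^2"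
      unfolding m by (intro mult_right_mono) auto
    then have "ereal (exp (-2) / 24 * max (p / (p - 1)) (p ^ 2)) \<le> ereal (exp (-2) / 2 * p^2)" by simp
    also have "\<dots> \<le> op_norm_Lp_weak p (commH (\<lambda>x. ln \<bar>x\<bar>))" by (rule est_C1[OF p])
    finally show ?thesis .
  qed
qed


end
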